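(* Let $G$ be a topological group acting continuously by linear isometries on a Banach space $X$. Suppose that $X$ admits an equivalent strictly convex norm $|\cdot|$. Define $\|x\|':=\sup_{g\in G}|gx|$ for $x\in X$. If this supremum is attained for every $x\in X$, then $\|\cdot\|'$ is a $G$-invariant strictly convex norm on $X$.
   Context: A norm is strictly convex if for every $x\neq y$ with $\|x\|=\|y\|$ one has $\|\frac{x+y}{2}\|<\|x\|$; it is $G$-invariant if $\|gx\|'=\|x\|'$ for all $g\in G$, $x\in X$. *)

theory Defs
  imports "HOL-Analysis.Analysis"
begin

definition is_norm :: "('x::real_vector \<Rightarrow> real) \<Rightarrow> bool" where
  "is_norm N \<longleftrightarrow>
     (\<forall>x. 0 \<le> N x) \<and> (\<forall>x. N x = 0 \<longleftrightarrow> x = 0) \<and>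
     (\<forall>a x. N (a *\<^sub>R x) = \<bar>a\<bar> * N x) \<and>
     (\<forall>x y. N (x + y) \<le> N x + N y)"

definition equivalent_norm :: "('x::real_normed_vector \<Rightarrow> real) \<Rightarrow> bool" where
  "equivalent_norm N \<longleftrightarrow> is_norm N \<and>
     (\<exists>c C. 0 < c \<and> 0 < C \<and> (\<forall>x. c * norm x \<le> N x \<and> N x \<le> C * norm x))"

definition strictly_convex_norm :: "('x::real_vector \<Rightarrow> real) \<Rightarrow> bool" where
  "strictly_convex_norm N \<longleftrightarrow>
     (\<forall>x y. x \<noteq> y \<and> N x = N y \<longrightarrow> N ((1/2) *\<^sub>R (x + y)) < N x)"

definition continuous_isometric_action ::
    "('g::topological_group_add \<Rightarrow> 'x::real_normed_vector \<Rightarrow> 'x) \<Rightarrow> bool" where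
  "continuous_isometric_action act \<longleftrightarrow>
     (\<forall>x. act 0 x = x) \<and>
     (\<forall>g h x. act (g + h) x = act g (act h x)) \<and>
     (\<forall>g. linear (act g)) \<and>
     (\<forall>g x. norm (act g x) = norm x) \<and>
     continuous_on UNIV (\<lambda>p. act (fst p) (snd p))"

definition G_invariant :: "('g \<Rightarrow> 'x \<Rightarrow> 'x) \<Rightarrow> ('x \<Rightarrow> real) \<Rightarrow> bool" where
  "G_invariant act N \<longleftrightarrow> (\<forall>g x. N (act g x) = N x)"

end

theory Submission
  imports Defs
begin

theorem proposition4p3:
  fixes act :: "'g::topological_group_add \<Rightarrow> 'x::banach \<Rightarrow> 'x"
    and N :: "'x \<Rightarrow> real"
  assumes "continuous_isometric_action act"
    and "equivalent_norm N"
    and "strictly_convex_norm N"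
    and "\<forall>x. \<exists>g. N (act g x) = (SUP h. N (act h x))"
  shows "is_norm (\<lambda>x. SUP g. N (act g x))
       \<and> G_invariant act (\<lambda>x. SUP g. N (act g x))
       \<and> strictly_convex_norm (\<lambda>x. SUP g. N (act g x))"
proof -
  define M where "M = (\<lambda>x. SUP g. N (act g x))"
  have A0: "\<And>x. act 0 x = x" and Aadd: "\<And>g h x. act (g + h) x = act g (act h x)"
    and Alin: "\<And>g. linear (act g)" and Aiso: "\<And>g x. norm (act g x) = norm x"
    using assms(1) unfolding continuous_isometric_action_def by auto
  have Nn: "is_norm N" using assms(2) unfolding equivalent_norm_def by auto
  then have N0: "\<And>x. 0 \<le> N x" and Nz: "\<And>x. N x = 0 \<longleftrightarrow> x = 0"
    and Ns: "\<And>a x. N (a *\<^sub>R x) = \<bar>a\<bar> * N x" and Nt: "\<And>x y. N (x + y) \<le> N x + N y"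
    unfolding is_norm_def by auto
  obtain C where C: "\<And>x. N x \<le> C * norm x"
    using assms(2) unfolding equivalent_norm_def by auto
  have bdd: "bdd_above (range (\<lambda>g. N (act g x)))" for x
  proof
    fix y assume "y \<in> range (\<lambda>g. N (act g x))"
    then obtain g where "y = N (act g x)" by auto
    then show "y \<le> C * norm x" using C[of "act g x"] Aiso by simp
  qed
  have up: "N (act h x) \<le> M x" for h x
    unfolding M_def by (rule cSUP_upper[OF _ bdd]) simp
  have least: "(\<And>h. N (act h x) \<le> B) \<Longrightarrow> M x \<le> B" for x B
    unfolding M_def by (rule cSUP_least) auto
  have att: "\<exists>g. N (act g x) = M x" for x using assms(4) unfolding M_def by auto
  have Mge: "N x \<le> M x" for x using up[of 0 x] A0 by simp
  have inv: "M (act g x) = M x" for g x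
  proof (rule antisym)
    show "M (act g x) \<le> M x" by (rule least) (metis Aadd up)
    show "M x \<le> M (act g x)"
    proof (rule least)
      fix h
      have "act h x = act (h + -g) (act g x)" by (simp add: Aadd[symmetric] add.assoc)
      then show "N (act h x) \<le> M (act g x)" using up by metis
    qed
  qed
  have norm: "is_norm M"
    unfolding is_norm_def
  proof (intro conjI allI)
    fix x show "0 \<le> M x" using Mge[of x] N0[of x] by linarith
  next
    fix x show "M x = 0 \<longleftrightarrow> x = 0"
    proof
      assume "M x = 0" then show "x = 0" using Mge[of x] N0[of x] Nz by (metis antisym)
    next
      assume "x = 0"
      then show "M x = 0" using least[of 0 0] Mge[of 0] N0[of 0] Nz Alin linear_0
        by (metis antisym)
    qed
  next
    fix a x
    show "M (a *\<^sub>R x) = \<bar>a\<bar> * M x"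
    proof (rule antisym)
      show "M (a *\<^sub>R x) \<le> \<bar>a\<bar> * M x"
        by (rule least) (simp add: linear_scale[OF Alin] Ns up mult_left_mono)
      obtain g where g: "N (act g x) = M x" using att by blast
      have "\<bar>a\<bar> * M x = N (act g (a *\<^sub>R x))" by (simp add: linear_scale[OF Alin] Ns g)
      also have "\<dots> \<le> M (a *\<^sub>R x)" by (rule up)
      finally show "\<bar>a\<bar> * M x \<le> M (a *\<^sub>R x)" .
    qed
  next
    fix x y
    show "M (x + y) \<le> M x + M y"
    proof (rule least)
      fix h
      have "N (act h (x + y)) \<le> N (act h x) + N (act h y)"
        by (simp add: linear_add[OF Alin] Nt)
      also have "\<dots> \<le> M x + M y" using up[of h x] up[of h y] by linarith
      finally show "N (act h (x + y)) \<le> M x + M y" .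
    qed
  qed
  have sc: "strictly_convex_norm M"
    unfolding strictly_convex_norm_def
  proof (intro allI impI)
    fix x y assume xy: "x \<noteq> y \<and> M x = M y"
    obtain g where g: "N (act g ((1/2) *\<^sub>R (x + y))) = M ((1/2) *\<^sub>R (x + y))" using att by blast
    define u where "u = act g x"
    define v where "v = act g y"
    have e: "act g ((1/2) *\<^sub>R (x + y)) = (1/2) *\<^sub>R (u + v)"
      unfolding u_def v_def by (simp add: linear_scale[OF Alin] linear_add[OF Alin])
    have uv: "u \<noteq> v"
    proof
      assume "u = v"
      then have "act (-g) u = act (-g) v" by simp
      then show False using xy unfolding u_def v_def by (metis Aadd A0 add.left_inverse)
    qed
    have hs: "N ((1/2) *\<^sub>R (u + v)) \<le> (1/2) * (N u + N v)"
      using Ns[of "1/2" "u+v"] Nt[of u v] by simp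
    have "N ((1/2) *\<^sub>R (u + v)) < M x"
    proof (cases "N u = N v")
      case True
      then have "N ((1/2) *\<^sub>R (u + v)) < N u"
        using assms(3) uv unfolding strictly_convex_norm_def by blast
      then show ?thesis using up[of g x] unfolding u_def by linarith
    next
      case False
      have "M x = M y" using xy by simp
      then show ?thesis using False hs up[of g x] up[of g y] unfolding u_def v_def
        by (cases "N (act g x) < N (act g y)") auto
    qed
    then show "M ((1/2) *\<^sub>R (x + y)) < M x" using g e by simp
  qed
  show ?thesis using norm sc inv unfolding M_def[symmetric] G_invariant_def by auto
qed

end
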